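(* Let $\Sigma=(\{x_1,x_2\},\{F_1,F_2\})$ be an LP seed of rank $2$ with $\hat F_1=F_1$ and $\hat F_2=F_2$, and let $x'_2=F_2/x_2$. Then $$R[x_1,x_2^{\pm1}]\cap R[x_1^{\pm1},x_2,x'_2]=R[x_1,x_2,x'_2].$$
   Context: $R$ is a unique factorization domain containing $\mathbb{Z}$ and $\mathcal{F}$ is the field of rational functions in $2$ variables over $\mathrm{Frac}(R)$. An LP seed of rank $2$ is a pair $(\{x_1,x_2\},\{F_1,F_2\})$ where $\{x_1,x_2\}$ is a transcendence basis of $\mathcal{F}$ over $\mathrm{Frac}(R)$ and $F_1,F_2$ are irreducible polynomials in $R[x_1,x_2]$, neither divisible by $x_1$ or $x_2$, with $F_1$ not involving $x_1$ and $F_2$ not involving $x_2$. The exchange Laurent polynomial is $\hat F_j=F_j/x_k^{a}$ ($\{j,k\}=\{1,2\}$), with $a\in\mathbb{Z}_{\ge0}$ maximal such that $F_k^{a}$ divides $F_j|_{x_k\leftarrow F_k/x'_k}$ in $R[(x'_k)^{-1}]$ (for $F_j$ regarded in the remaining variables). All rings are subrings of $\mathcal{F}$. *)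

theory Defs
  imports "HOL-Computational_Algebra.Polynomial" "HOL-Computational_Algebra.Fraction_Field"
    "HOL-Computational_Algebra.Factorial_Ring"
begin

text \<open>Model: R[x1,x2] is represented by the type 'a poly poly, the inner variable
  being x1 and the outer variable being x2.\<close>

type_synonym 'a bipoly = "'a poly poly"

definition in_x1 :: "'a::comm_semiring_1 poly \<Rightarrow> 'a bipoly" where
  "in_x1 p = [:p:]"

definition in_x2 :: "'a::comm_semiring_1 poly \<Rightarrow> 'a bipoly" where
  "in_x2 p = map_poly (\<lambda>c. [:c:]) p"

definition X1 :: "'a::comm_semiring_1 bipoly" where "X1 = in_x1 [:0, 1:]"
definition X2 :: "'a::comm_semiring_1 bipoly" where "X2 = in_x2 [:0, 1:]"

definition fr :: "'a::idom bipoly \<Rightarrow> 'a bipoly fract" where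
  "fr p = Fract p 1"

inductive_set gen_ring :: "'a::idom bipoly fract set \<Rightarrow> 'a bipoly fract set"
  for G where
    const: "fr [:[:c:]:] \<in> gen_ring G"
  | gen: "g \<in> G \<Longrightarrow> g \<in> gen_ring G"
  | add: "a \<in> gen_ring G \<Longrightarrow> b \<in> gen_ring G \<Longrightarrow> a + b \<in> gen_ring G"
  | neg: "a \<in> gen_ring G \<Longrightarrow> - a \<in> gen_ring G"
  | mult: "a \<in> gen_ring G \<Longrightarrow> b \<in> gen_ring G \<Longrightarrow> a * b \<in> gen_ring G"

text \<open>Exchange Laurent polynomial in rank 2.  F_j is a polynomial in x_k only
  (given as univariate polynomial fj), F_k is a polynomial in x_j only (fk).
  Substituting x_k := F_k / x'_k into F_j gives, writing y = (x'_k)^{-1},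
  sum_i c_i F_k^i y^i, an element of R[x_j][y] (outer variable y, coefficients in R[x_j]).\<close>
definition lp_subst :: "'a::comm_semiring_1 poly \<Rightarrow> 'a poly \<Rightarrow> 'a poly poly" where
  "lp_subst fj fk = (\<Sum>i\<le>degree fj. monom (smult (coeff fj i) (fk ^ i)) i)"

definition lp_exp :: "'a::comm_semiring_1 poly \<Rightarrow> 'a poly \<Rightarrow> nat" where
  "lp_exp fj fk = (GREATEST a. [:fk ^ a:] dvd lp_subst fj fk)"

definition hatF1 :: "'a::idom poly \<Rightarrow> 'a poly \<Rightarrow> 'a bipoly fract" where
  "hatF1 f1 f2 = fr (in_x2 f1) / fr X2 ^ lp_exp f1 f2"

definition hatF2 :: "'a::idom poly \<Rightarrow> 'a poly \<Rightarrow> 'a bipoly fract" where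
  "hatF2 f1 f2 = fr (in_x1 f2) / fr X1 ^ lp_exp f2 f1"

end

theory Submission imports Defs begin

lemma X1_eq: "X1 = [:[:0,1:]:]" by (simp add: X1_def in_x1_def)
lemma X2_eq: "(X2 :: 'a::comm_semiring_1 bipoly) = monom 1 1"
  by (simp add: X2_def in_x2_def map_poly_pCons monom_altdef)

definition good :: "'a::idom poly \<Rightarrow> nat \<Rightarrow> 'a bipoly \<Rightarrow> bool" where
  "good f n p \<longleftrightarrow> (\<forall>j. f ^ (n - j) dvd coeff p j)"

lemma good_mult: "good f n p \<Longrightarrow> good f m q \<Longrightarrow> good f (n+m) (p*q)"
  unfolding good_def coeff_mult
proof (intro allI dvd_sum)
  fix j i :: nat assume gp: "\<forall>j. f ^ (n - j) dvd coeff p j" and gq: "\<forall>j. f ^ (m - j) dvd coeff q j" and i: "i \<in> {..j}"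
  have "f ^ ((n - i) + (m - (j - i))) dvd coeff p i * coeff q (j - i)"
    unfolding power_add using gp gq by (simp add: mult_dvd_mono)
  moreover have "f ^ (n + m - j) dvd f ^ ((n - i) + (m - (j - i)))"
    by (rule le_imp_power_dvd) (use i in auto)
  ultimately show "f ^ (n + m - j) dvd coeff p i * coeff q (j - i)" using dvd_trans by blast
qed

lemma good_add: "good f n p \<Longrightarrow> good f n q \<Longrightarrow> good f n (p+q)"
  by (simp add: good_def)
lemma good_neg: "good f n p \<Longrightarrow> good f n (-p)"
  by (simp add: good_def)
lemma good_0: "good f 0 p" by (simp add: good_def)
lemma good_X2: "good f n (X2 ^ n)"
  by (simp add: good_def X2_eq monom_power coeff_monom)
lemma good_F: "good f 1 [:f:]"
  by (auto simp add: good_def coeff_pCons split: nat.splits)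

lemma x_prime: "[:0,1::'a::idom:] dvd (p*q) \<Longrightarrow> [:0,1:] dvd p \<or> [:0,1:] dvd q"
  using dvd_iff_poly_eq_0[of "0::'a"] by simp

lemma not_dvd_pow: "\<not> [:0,1::'a::idom:] dvd f \<Longrightarrow> \<not> [:0,1:] dvd f ^ k"
proof (induction k)
  case 0 then show ?case using dvd_iff_poly_eq_0[of "0::'a"] by simp
next
  case (Suc k)
  show ?case
  proof
    assume "[:0,1:] dvd f ^ Suc k"
    then have "[:0,1:] dvd f * f ^ k" by simp
    then show False using x_prime[of f "f^k"] Suc by blast
  qed
qed

lemma cancel1: assumes "\<not> [:0,1::'a::idom:] dvd f" "f^k dvd [:0,1:]*c" shows "f^k dvd c"
proof -
  obtain e where e: "[:0,1:]*c = f^k * e" using assms(2) by blast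
  have "[:0,1:] dvd [:0,1:]*c" by (rule dvd_triv_left)
  then have "[:0,1:] dvd f^k * e" by (simp only: e)
  then have "[:0,1:] dvd e" using x_prime not_dvd_pow[OF assms(1)] by blast
  then obtain e' where e': "e = [:0,1:] * e'" by blast
  have "[:0,1:] * c = [:0,1:] * (f^k * e')" using e e' by (simp add: ac_simps)
  then have "c = f^k*e'" by simp
  then show ?thesis by simp
qed

lemma cancelN: assumes "\<not> [:0,1::'a::idom:] dvd f" shows "f^k dvd [:0,1:]^N*c \<Longrightarrow> f^k dvd c"
proof (induction N)
  case (Suc N)
  have "[:0,1:]^Suc N * c = [:0,1:] * ([:0,1:]^N * c)" by (simp add: mult.assoc)
  then show ?case using cancel1[OF assms, of k "[:0,1:]^N * c"] Suc by simp
qed simp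

lemma good_cancel: assumes "\<not> [:0,1::'a::idom:] dvd f" "good f k (X1^N * r)" shows "good f k r"
  unfolding good_def
proof
  fix j
  have "X1^N * r = smult ([:0,1:]^N) r" by (simp add: X1_eq poly_const_pow)
  then have "coeff (X1^N * r) j = [:0,1:]^N * coeff r j" by simp
  then show "f ^ (k - j) dvd coeff r j" using assms(2) cancelN[OF assms(1)] unfolding good_def by metis
qed


lemma gen_ring_sub: assumes "G \<subseteq> gen_ring H" shows "x \<in> gen_ring G \<Longrightarrow> x \<in> gen_ring H"
  by (induction rule: gen_ring.induct) (use assms in \<open>auto intro: gen_ring.intros\<close>)

lemma fr_0: "fr 0 = (0 :: 'a::idom bipoly fract)" by (simp add: fr_def Zero_fract_def)
lemma fr_1: "fr 1 = (1 :: 'a::idom bipoly fract)" by (simp add: fr_def One_fract_def)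

lemma gr_0: "0 \<in> gen_ring G"
proof -
  have "fr [:[:0:]:] \<in> gen_ring G" by (rule gen_ring.const)
  then show ?thesis by (simp add: fr_0)
qed
lemma gr_1: "1 \<in> gen_ring G"
proof -
  have "fr [:[:1:]:] \<in> gen_ring G" by (rule gen_ring.const)
  then show ?thesis by (simp add: fr_1 one_pCons[symmetric])
qed
lemma gr_pow: "a \<in> gen_ring G \<Longrightarrow> a ^ n \<in> gen_ring G"
  by (induction n) (auto intro: gen_ring.intros gr_1)

lemma fract_pow: "(Fract (a::'a::idom) b) ^ n = Fract (a^n) (b^n)"
  by (induction n) (simp_all add: One_fract_def)

lemma X1_nz: "X1 \<noteq> (0::'a::idom bipoly)" by (simp add: X1_eq)
lemma X2_nz: "X2 \<noteq> (0::'a::idom bipoly)" by (simp add: X2_eq)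


lemma gr_inner: assumes "fr X1 \<in> G" shows "fr [:d:] \<in> gen_ring (G :: 'a::idom bipoly fract set)"
proof (induction d)
  case 0 then show ?case using gr_0 by (simp add: fr_0)
next
  case (pCons a q)
  have "fr [:pCons a q:] = fr [:[:a:]:] + fr X1 * fr [:q:]"
    by (simp add: fr_def X1_eq)
  then show ?case using pCons assms by (auto intro: gen_ring.intros)
qed


lemma fract_add_same: "c \<noteq> 0 \<Longrightarrow> Fract (a::'a::idom) c + Fract b c = Fract (a+b) c"
  by (simp add: eq_fract algebra_simps)

lemma fract_0: "Fract (0::'a::idom) c = 0"
  by (simp add: Zero_fract_def eq_fract(3))

lemma S_sub:
  fixes f :: "'a::idom poly"
  assumes "good f n p"
  shows "Fract p (X2^n) \<in> gen_ring {fr X1, fr X2, fr [:f:] / fr X2}"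
  using assms
proof (induction p arbitrary: n)
  case 0 then show ?case by (simp add: fract_0 gr_0)
next
  case (pCons a q n)
  let ?G = "{fr X1, fr X2, fr [:f:] / fr X2} :: 'a bipoly fract set"
  have inner: "fr [:d:] \<in> gen_ring ?G" for d by (rule gr_inner) simp
  have X2g: "fr X2 \<in> gen_ring ?G" by (rule gen_ring.gen) simp
  have Fg: "Fract [:f:] X2 \<in> gen_ring ?G"
  proof -
    have "fr [:f:] / fr X2 \<in> gen_ring ?G" by (rule gen_ring.gen) simp
    then show ?thesis using X2_nz by (simp add: fr_def)
  qed
  show ?case
  proof (cases n)
    case 0
    have gq: "good f 0 q" by (rule good_0)
    have "Fract (pCons a q) (X2^n) = fr [:a:] + fr X2 * Fract q (X2^0)"
      using 0 by (simp add: fr_def X2_eq monom_Suc)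
    then show ?thesis using pCons.IH[OF gq] inner X2g by (auto intro: gen_ring.intros)
  next
    case (Suc m)
    have gq: "good f m q"
      unfolding good_def
    proof
      fix j
      have "f ^ (n - Suc j) dvd coeff (pCons a q) (Suc j)" using pCons.prems unfolding good_def by blast
      then show "f ^ (m - j) dvd coeff q j" using Suc by simp
    qed
    have "f ^ (n - 0) dvd coeff (pCons a q) 0" using pCons.prems unfolding good_def by blast
    then obtain b where b: "a = f ^ Suc m * b" using Suc by auto
    have e1: "Fract q (X2^m) = Fract (X2*q) (X2^Suc m)"
      using mult_fract_cancel[OF X2_nz, of q "X2^m"] by simp
    have e2: "fr [:b:] * (Fract [:f:] X2) ^ Suc m = Fract ([:b:] * [:f:] ^ Suc m) (X2 ^ Suc m)"
      by (simp add: fr_def fract_pow)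
    have e3: "[:b:] * [:f:] ^ Suc m + X2 * q = pCons a q"
      by (simp add: b X2_eq monom_Suc poly_const_pow algebra_simps)
    have "Fract (pCons a q) (X2^n) = fr [:b:] * (Fract [:f:] X2) ^ Suc m + Fract q (X2^m)"
    proof -
      have nz: "X2 ^ Suc m \<noteq> (0::'a bipoly)" by (simp add: X2_eq)
      have "fr [:b:] * (Fract [:f:] X2) ^ Suc m + Fract q (X2^m)
          = Fract ([:b:] * [:f:] ^ Suc m + X2 * q) (X2 ^ Suc m)"
        unfolding e1 e2 by (rule fract_add_same[OF nz])
      then show ?thesis unfolding e3 using Suc by simp
    qed
    moreover have "fr [:b:] * (Fract [:f:] X2) ^ Suc m + Fract q (X2^m) \<in> gen_ring ?G"
      by (intro gen_ring.add gen_ring.mult inner gr_pow[OF Fg] pCons.IH[OF gq])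
    ultimately show ?thesis by simp
  qed
qed


lemma A_char:
  "z \<in> gen_ring {fr X1, fr X2, inverse (fr X2)} \<Longrightarrow> \<exists>p n. z = Fract p (X2^n :: 'a::idom bipoly)"
proof (induction rule: gen_ring.induct)
  case (const c)
  have "fr [:[:c:]:] = Fract [:[:c:]:] (X2^0 :: 'a bipoly)" by (simp add: fr_def)
  then show ?case by blast
next
  case (gen g)
  then show ?case
  proof (elim insertE)
    assume "g = fr X1" then show ?thesis by (intro exI[of _ X1] exI[of _ 0]) (simp add: fr_def)
  next
    assume "g = fr X2" then show ?thesis by (intro exI[of _ X2] exI[of _ 0]) (simp add: fr_def)
  next
    assume "g = inverse (fr X2)" then show ?thesis by (intro exI[of _ 1] exI[of _ 1]) (simp add: fr_def)
  next
    assume "g \<in> {}" then show ?thesis by simp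
  qed
next
  case (add a b)
  then obtain p n q m where a: "a = Fract p (X2^n)" and b: "b = Fract q (X2^m)" by blast
  have "a + b = Fract (p * X2^m + q * X2^n) (X2^(n+m))"
    unfolding a b by (simp add: X2_nz power_add)
  then show ?case by blast
next
  case (neg a)
  then obtain p n where a: "a = Fract p (X2^n)" by blast
  have "- a = Fract (-p) (X2^n)" unfolding a by simp
  then show ?case by blast
next
  case (mult a b)
  then obtain p n q m where a: "a = Fract p (X2^n)" and b: "b = Fract q (X2^m)" by blast
  have "a * b = Fract (p * q) (X2^(n+m))"
    unfolding a b by (simp add: power_add)
  then show ?case by blast
qed

lemma B_char:
  fixes f :: "'a::idom poly"
  shows "z \<in> gen_ring {fr X1, inverse (fr X1), fr X2, fr [:f:] / fr X2} \<Longrightarrow>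
    \<exists>q N m. good f m q \<and> z = Fract q (X1^N * X2^m)"
proof (induction rule: gen_ring.induct)
  case (const c)
  then show ?case by (intro exI[of _ "[:[:c:]:]"] exI[of _ 0]) (simp add: fr_def good_0)
next
  case (gen g)
  then show ?case
  proof (elim insertE)
    assume "g = fr X1" then show ?thesis by (intro exI[of _ X1] exI[of _ 0]) (simp add: fr_def good_0)
  next
    assume "g = inverse (fr X1)" then show ?thesis by (intro exI[of _ 1] exI[of _ 1] exI[of _ 0]) (simp add: fr_def good_0)
  next
    assume "g = fr X2" then show ?thesis by (intro exI[of _ X2] exI[of _ 0]) (simp add: fr_def good_0)
  next
    assume "g = fr [:f:] / fr X2"
    then have "g = Fract [:f:] (X1^0 * X2^1)" using X2_nz by (simp add: fr_def)
    then show ?thesis using good_F by blast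
  next
    assume "g \<in> {}" then show ?thesis by simp
  qed
next
  case (add a b)
  then obtain p n N q m M where gp: "good f n p" and gq: "good f m q"
    and a: "a = Fract p (X1^N * X2^n)" and b: "b = Fract q (X1^M * X2^m)" by blast
  have gD: "good f k (X1^K * X2^k)" for K k using good_mult[of f 0 "X1^K" k "X2^k", OF good_0 good_X2] by simp
  have g1: "good f (n+m) (p * (X1^M * X2^m))" using good_mult[OF gp gD] .
  have g2: "good f (m+n) (q * (X1^N * X2^n))" using good_mult[OF gq gD] .
  then have g2: "good f (n+m) (q * (X1^N * X2^n))" by (simp add: add.commute)
  have "a + b = Fract (p * (X1^M * X2^m) + q * (X1^N * X2^n)) (X1^(N+M) * X2^(n+m))"
    unfolding a b by (simp add: X1_nz X2_nz power_add algebra_simps)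
  then show ?case using good_add[OF g1 g2] by blast
next
  case (neg a)
  then obtain p n N where gp: "good f n p" and a: "a = Fract p (X1^N * X2^n)" by blast
  have "- a = Fract (-p) (X1^N * X2^n)" unfolding a by simp
  then show ?case using good_neg[OF gp] by blast
next
  case (mult a b)
  then obtain p n N q m M where gp: "good f n p" and gq: "good f m q"
    and a: "a = Fract p (X1^N * X2^n)" and b: "b = Fract q (X1^M * X2^m)" by blast
  have "a * b = Fract (p * q) (X1^(N+M) * X2^(n+m))"
    unfolding a b by (simp add: power_add algebra_simps)
  then show ?case using good_mult[OF gp gq] by blast
qed


theorem lemma4p4:
  fixes f1 f2 :: "'a::{factorial_semiring, idom, ring_char_0} poly"
  assumes irr1: "irreducible (in_x2 f1)"
      and irr2: "irreducible (in_x1 f2)"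
      and ndvd1: "\<not> X1 dvd in_x2 f1" and ndvd1': "\<not> X2 dvd in_x2 f1"
      and ndvd2: "\<not> X1 dvd in_x1 f2" and ndvd2': "\<not> X2 dvd in_x1 f2"
      and hat1: "hatF1 f1 f2 = fr (in_x2 f1)"
      and hat2: "hatF2 f1 f2 = fr (in_x1 f2)"
  shows "let x1 = fr X1; x2 = fr X2; x2' = fr (in_x1 f2) / fr X2 in
         gen_ring {x1, x2, inverse x2} \<inter> gen_ring {x1, inverse x1, x2, x2'}
           = gen_ring {x1, x2, x2'}"
proof -
  have nd: "\<not> [:0,1:] dvd f2"
  proof
    assume "[:0,1:] dvd f2"
    then obtain c where "f2 = [:0,1:] * c" by blast
    then have "in_x1 f2 = X1 * [:c:]" by (simp add: in_x1_def X1_eq)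
    then have "X1 dvd in_x1 f2" by (metis dvd_triv_left)
    then show False using ndvd2 by simp
  qed
  let ?A = "gen_ring {fr X1, fr X2, inverse (fr X2)} :: 'a bipoly fract set"
  let ?B = "gen_ring {fr X1, inverse (fr X1), fr X2, fr [:f2:] / fr X2} :: 'a bipoly fract set"
  let ?C = "gen_ring {fr X1, fr X2, fr [:f2:] / fr X2} :: 'a bipoly fract set"
  have "?A \<inter> ?B = ?C"
  proof
    show "?A \<inter> ?B \<subseteq> ?C"
    proof
      fix z assume z: "z \<in> ?A \<inter> ?B"
      obtain p n where zp: "z = Fract p (X2^n)" using A_char z by blast
      obtain q N m where gq: "good f2 m q" and zq: "z = Fract q (X1^N * X2^m)"
        using B_char[of z f2] z by blast
      have "p * (X1^N * X2^m) = q * X2^n"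
        using zp zq by (simp add: eq_fract X1_nz X2_nz)
      then have e: "X1^N * (p * X2^m) = q * X2^n" by (simp add: algebra_simps)
      have "good f2 (m+n) (q * X2^n)" by (rule good_mult[OF gq good_X2])
      then have g: "good f2 (m+n) (p * X2^m)" using good_cancel[OF nd] e by metis
      have "z = Fract (p * X2^m) (X2^(m+n))"
        unfolding zp by (simp add: eq_fract X2_nz power_add algebra_simps)
      then show "z \<in> ?C" using S_sub[OF g] by simp
    qed
  next
    have "fr [:f2:] / fr X2 \<in> ?A"
    proof -
      have "fr [:f2:] * inverse (fr X2) \<in> ?A"
        by (intro gen_ring.mult gr_inner gen_ring.gen) auto
      then show ?thesis by (simp add: divide_inverse)
    qed
    then have sA: "{fr X1, fr X2, fr [:f2:] / fr X2} \<subseteq> ?A" by (auto intro: gen_ring.gen)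
    have sB: "{fr X1, fr X2, fr [:f2:] / fr X2} \<subseteq> ?B" by (auto intro: gen_ring.gen)
    have "?C \<subseteq> ?A" using gen_ring_sub[OF sA] by blast
    moreover have "?C \<subseteq> ?B" using gen_ring_sub[OF sB] by blast
    ultimately show "?C \<subseteq> ?A \<inter> ?B" by blast
  qed
  then show ?thesis by (simp add: Let_def in_x1_def)
qed

end
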